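(* Let $G=(\Sigma,S,s_0,\delta)$ be a regular commutative grammar, let $n\in\mathbb{N}$, and let $D$ be a run of $G$ such that $\|D\|>1+n|\delta|$. Then $D=D_1+nC$, where $D_1$ is a run of $G$, $C$ is a simple cycle, and $\mathrm{supp}(D_1)=\mathrm{supp}(D)$.
   Context: For $v\in\mathbb{N}^X$, $|v|=\sum_x v(x)$ and $\|v\|=\max_x v(x)$. A commutative grammar is $G=(\Sigma,S,s_0,\delta)$ with finite alphabet $\Sigma$, finite state set $S$, $s_0\in S$, and a finite set $\delta\subseteq S\times\mathbb{N}^\Sigma\times\mathbb{N}^S$ of transitions $\tau=(s,a,t)$ ($\mathrm{source}(\tau)=s$, $\mathrm{out}(\tau)=a$, $\mathrm{target}(\tau)=t$); every state is the source of some transition, and every transition has $|a|\le1$, $|t|\le2$. It is regular if $|t|\le1$ for all transitions. For $D\in\mathbb{N}^\delta$ let $\mathrm{source}(D)(s)=\sum_{\mathrm{source}(\tau)=s}D(\tau)$, $\mathrm{target}(D)=\sum_\tau D(\tau)\mathrm{target}(\tau)$, $\mathrm{supp}(D)=\{s:\mathrm{source}(D)(s)>0\}$. $D$ is connected from $s$ if every $t\in\mathrm{supp}(D)$ equals $s$ or is reachable by transitions $\tau_1,\ldots,\tau_m$ with $D(\tau_i)>0$, $\mathrm{source}(\tau_1)=s$, $\mathrm{source}(\tau_{i+1})\in\mathrm{target}(\tau_i)$, $t\in\mathrm{target}(\tau_m)$. $D$ is a cycle from $s$ if it is connected from $s$ and $\mathrm{source}(D)=\mathrm{target}(D)$; a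 cycle is a cycle from some state. $D$ is a run if it is connected from $s_0$ and $\mathrm{source}(D)=\mathrm{target}(D)+\{s_0\}$. A simple cycle is a nonzero cycle that cannot be written as a sum of smaller nonzero cycles. *)

theory Defs
  imports Main
begin

(* A vector v in N^X is a function 'x => nat that vanishes outside X. *)
definition vsupp_in :: "('x \<Rightarrow> nat) \<Rightarrow> 'x set \<Rightarrow> bool" where
  "vsupp_in v X \<longleftrightarrow> (\<forall>x. x \<notin> X \<longrightarrow> v x = 0)"

definition vsize :: "'x set \<Rightarrow> ('x \<Rightarrow> nat) \<Rightarrow> nat" where
  "vsize X v = (\<Sum>x\<in>X. v x)"

definition vnorm :: "'x set \<Rightarrow> ('x \<Rightarrow> nat) \<Rightarrow> nat" where
  "vnorm X v = Max (insert 0 (v ` X))"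

type_synonym ('a, 's) trans = "'s \<times> ('a \<Rightarrow> nat) \<times> ('s \<Rightarrow> nat)"

definition tsource :: "('a, 's) trans \<Rightarrow> 's" where "tsource \<tau> = fst \<tau>"
definition tout :: "('a, 's) trans \<Rightarrow> ('a \<Rightarrow> nat)" where "tout \<tau> = fst (snd \<tau>)"
definition ttarget :: "('a, 's) trans \<Rightarrow> ('s \<Rightarrow> nat)" where "ttarget \<tau> = snd (snd \<tau>)"

definition comm_grammar ::
  "'a set \<Rightarrow> 's set \<Rightarrow> 's \<Rightarrow> ('a, 's) trans set \<Rightarrow> bool" where
  "comm_grammar Sig S s0 \<delta> \<longleftrightarrow>
     finite Sig \<and> finite S \<and> s0 \<in> S \<and> finite \<delta> \<and>
     (\<forall>\<tau>\<in>\<delta>. tsource \<tau> \<in> S \<and> vsupp_in (tout \<tau>) Sig \<and> vsupp_in (ttarget \<tau>) S \<and>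
              vsize Sig (tout \<tau>) \<le> 1 \<and> vsize S (ttarget \<tau>) \<le> 2) \<and>
     (\<forall>s\<in>S. \<exists>\<tau>\<in>\<delta>. tsource \<tau> = s)"

definition regular_grammar ::
  "'a set \<Rightarrow> 's set \<Rightarrow> 's \<Rightarrow> ('a, 's) trans set \<Rightarrow> bool" where
  "regular_grammar Sig S s0 \<delta> \<longleftrightarrow>
     comm_grammar Sig S s0 \<delta> \<and> (\<forall>\<tau>\<in>\<delta>. vsize S (ttarget \<tau>) \<le> 1)"

definition src :: "('a, 's) trans set \<Rightarrow> (('a, 's) trans \<Rightarrow> nat) \<Rightarrow> 's \<Rightarrow> nat" where
  "src \<delta> D s = (\<Sum>\<tau>\<in>{\<tau>\<in>\<delta>. tsource \<tau> = s}. D \<tau>)"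

definition tgt :: "('a, 's) trans set \<Rightarrow> (('a, 's) trans \<Rightarrow> nat) \<Rightarrow> 's \<Rightarrow> nat" where
  "tgt \<delta> D s = (\<Sum>\<tau>\<in>\<delta>. D \<tau> * ttarget \<tau> s)"

definition dsupp :: "('a, 's) trans set \<Rightarrow> (('a, 's) trans \<Rightarrow> nat) \<Rightarrow> 's set" where
  "dsupp \<delta> D = {s. src \<delta> D s > 0}"

inductive reach :: "('a, 's) trans set \<Rightarrow> (('a, 's) trans \<Rightarrow> nat) \<Rightarrow> 's \<Rightarrow> 's \<Rightarrow> bool"
  for \<delta> D s where
  base: "\<tau> \<in> \<delta> \<Longrightarrow> D \<tau> > 0 \<Longrightarrow> tsource \<tau> = s \<Longrightarrow> ttarget \<tau> t > 0 \<Longrightarrow> reach \<delta> D s t"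
| step: "reach \<delta> D s u \<Longrightarrow> \<tau> \<in> \<delta> \<Longrightarrow> D \<tau> > 0 \<Longrightarrow> tsource \<tau> = u \<Longrightarrow> ttarget \<tau> t > 0
         \<Longrightarrow> reach \<delta> D s t"

definition connected_from :: "('a, 's) trans set \<Rightarrow> (('a, 's) trans \<Rightarrow> nat) \<Rightarrow> 's \<Rightarrow> bool" where
  "connected_from \<delta> D s \<longleftrightarrow> (\<forall>t\<in>dsupp \<delta> D. t = s \<or> reach \<delta> D s t)"

definition is_vec :: "('a, 's) trans set \<Rightarrow> (('a, 's) trans \<Rightarrow> nat) \<Rightarrow> bool" where
  "is_vec \<delta> D \<longleftrightarrow> vsupp_in D \<delta>"

definition cycle_from :: "('a, 's) trans set \<Rightarrow> (('a, 's) trans \<Rightarrow> nat) \<Rightarrow> 's \<Rightarrow> bool" where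
  "cycle_from \<delta> D s \<longleftrightarrow> is_vec \<delta> D \<and> connected_from \<delta> D s \<and> src \<delta> D = tgt \<delta> D"

definition is_cycle :: "'s set \<Rightarrow> ('a, 's) trans set \<Rightarrow> (('a, 's) trans \<Rightarrow> nat) \<Rightarrow> bool" where
  "is_cycle S \<delta> D \<longleftrightarrow> (\<exists>s\<in>S. cycle_from \<delta> D s)"

definition is_run :: "'s \<Rightarrow> ('a, 's) trans set \<Rightarrow> (('a, 's) trans \<Rightarrow> nat) \<Rightarrow> bool" where
  "is_run s0 \<delta> D \<longleftrightarrow> is_vec \<delta> D \<and> connected_from \<delta> D s0 \<and>
     src \<delta> D = (\<lambda>s. tgt \<delta> D s + (if s = s0 then 1 else 0))"

definition simple_cycle :: "'s set \<Rightarrow> ('a, 's) trans set \<Rightarrow> (('a, 's) trans \<Rightarrow> nat) \<Rightarrow> bool" where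
  "simple_cycle S \<delta> D \<longleftrightarrow> is_cycle S \<delta> D \<and> D \<noteq> (\<lambda>_. 0) \<and>
     \<not> (\<exists>Cs. length Cs \<ge> 2 \<and> (\<forall>C\<in>set Cs. is_cycle S \<delta> C \<and> C \<noteq> (\<lambda>_. 0)) \<and>
            D = (\<lambda>\<tau>. \<Sum>C\<leftarrow>Cs. C \<tau>))"

end

theory Submission
  imports Defs
begin


definition fib :: "'e set \<Rightarrow> ('e \<Rightarrow> 's) \<Rightarrow> ('e \<Rightarrow> nat) \<Rightarrow> 's \<Rightarrow> nat" where
  "fib E g X v = (\<Sum>e\<in>{e\<in>E. g e = v}. X e)"

lemma tele:
  fixes a :: "nat \<Rightarrow> nat"
  shows "i \<le> j \<Longrightarrow> (\<Sum>k\<in>{i..<j}. a (Suc k)) + a i = (\<Sum>k\<in>{i..<j}. a k) + a j"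
proof (induction j)
  case 0 then show ?case by simp
next
  case (Suc j)
  show ?case
  proof (cases "i = Suc j")
    case True then show ?thesis by simp
  next
    case False
    then have "i \<le> j" using Suc.prems by simp
    then show ?thesis using Suc.IH by simp
  qed
qed

lemma fib_diff:
  assumes "\<And>e. G e \<le> D e"
  shows "fib E g (\<lambda>e. D e - G e) v = fib E g D v - fib E g G v"
  unfolding fib_def by (rule sum_subtractf_nat) (use assms in auto)

lemma fib_mult: "fib E g (\<lambda>e. k * C e) v = k * fib E g C v"
  unfolding fib_def by (simp add: sum_distrib_left)

lemma fib_mono: "(\<And>e. G e \<le> D e) \<Longrightarrow> fib E g G v \<le> fib E g D v"
  unfolding fib_def by (rule sum_mono) auto

lemma W:
  fixes E :: "'e set" and so nx :: "'e \<Rightarrow> 's" and D :: "'e \<Rightarrow> nat"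
  assumes fin: "finite E" and circ: "\<And>v. fib E so D v = fib E nx D v"
    and e0: "e0 \<in> E" "0 < D e0"
  shows "\<exists>C. (\<forall>e. C e \<le> 1) \<and> (\<forall>e. 0 < C e \<longrightarrow> e \<in> E \<and> 0 < D e) \<and> (\<exists>e. 0 < C e)
             \<and> (\<forall>v. fib E so C v = fib E nx C v)"
proof -
  define P where "P = {e\<in>E. 0 < D e}"
  have outex: "\<exists>e. e \<in> P \<and> so e = v" if "e1 \<in> P" "nx e1 = v" for v e1
  proof -
    have "D e1 \<le> fib E nx D v" unfolding fib_def
      by (rule member_le_sum) (use that fin in \<open>auto simp: P_def\<close>)
    then have "fib E so D v \<noteq> 0" using circ that by (auto simp: P_def)
    then obtain e where "e \<in> {e\<in>E. so e = v}" "D e \<noteq> 0" unfolding fib_def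
      using fin sum_eq_0_iff[of "{e\<in>E. so e = v}" D] by auto
    then show ?thesis by (auto simp: P_def)
  qed
  define f where "f v = (SOME e. e \<in> P \<and> so e = v)" for v
  define u where "u = rec_nat (nx e0) (\<lambda>_ w. nx (f w))"
  have u0: "u 0 = nx e0" and uS: "\<And>k. u (Suc k) = nx (f (u k))" by (simp_all add: u_def)
  have inv: "\<exists>e1. e1 \<in> P \<and> nx e1 = u k" for k
  proof (induction k)
    case 0 then show ?case using e0 u0 by (auto simp: P_def)
  next
    case (Suc k)
    then obtain e1 where "e1 \<in> P" "nx e1 = u k" by blast
    then have "\<exists>e. e \<in> P \<and> so e = u k" using outex by blast
    then have "f (u k) \<in> P \<and> so (f (u k)) = u k" unfolding f_def by (rule someI_ex)
    then show ?case using uS[of k] by metis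
  qed
  have fu: "f (u k) \<in> P \<and> so (f (u k)) = u k" for k
  proof -
    obtain e1 where "e1 \<in> P" "nx e1 = u k" using inv by blast
    then have "\<exists>e. e \<in> P \<and> so e = u k" using outex by blast
    then show ?thesis unfolding f_def by (rule someI_ex)
  qed
  have urng: "u k \<in> nx ` E" for k
    using inv[of k] unfolding P_def by (metis (mono_tags, lifting) image_eqI mem_Collect_eq)
  have "\<not> inj_on u {0..card (nx ` E)}"
  proof
    assume "inj_on u {0..card (nx ` E)}"
    then have "card {0..card (nx ` E)} \<le> card (nx ` E)"
      by (rule card_inj_on_le) (use urng fin in auto)
    then show False by simp
  qed
  then obtain a b where "a \<noteq> b" "u a = u b" unfolding inj_on_def by blast
  then have ex: "\<exists>j. \<exists>i<j. u i = u j"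
    by (metis linorder_neqE_nat)
  define j where "j = (LEAST j. \<exists>i<j. u i = u j)"
  obtain i where ij: "i < j" "u i = u j" using LeastI_ex[OF ex] unfolding j_def by blast
  have dist: "u k \<noteq> u l" if "k < l" "l < j" for k l
    using not_less_Least[of l "\<lambda>j. \<exists>i<j. u i = u j"] that unfolding j_def by blast
  define C where "C e = (\<Sum>k\<in>{i..<j}. if f (u k) = e then 1 else 0::nat)" for e
  have Ccard: "C e = card {k\<in>{i..<j}. f (u k) = e}" for e
    unfolding C_def by (simp add: sum.If_cases Int_def conj_commute)
  have C1: "C e \<le> 1" for e
  proof -
    have "\<forall>a1\<in>{k\<in>{i..<j}. f (u k) = e}. \<forall>a2\<in>{k\<in>{i..<j}. f (u k) = e}. a1 = a2"
    proof (intro ballI)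
      fix a1 a2 assume "a1 \<in> {k\<in>{i..<j}. f (u k) = e}" "a2 \<in> {k\<in>{i..<j}. f (u k) = e}"
      then have "u a1 = u a2" "a1 < j" "a2 < j" using fu[of a1] fu[of a2] by auto
      then show "a1 = a2" using dist by (metis linorder_neqE_nat)
    qed
    then show ?thesis unfolding Ccard using card_le_Suc0_iff_eq[of "{k\<in>{i..<j}. f (u k) = e}"] by simp
  qed
  have Csupp: "0 < C e \<longrightarrow> e \<in> E \<and> 0 < D e" for e
  proof
    assume "0 < C e"
    then obtain k where "f (u k) = e" unfolding Ccard by (metis (mono_tags, lifting) card.empty empty_Collect_eq less_irrefl)
    then show "e \<in> E \<and> 0 < D e" using fu[of k] by (auto simp: P_def)
  qed
  have Cnz: "0 < C (f (u i))"
  proof -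
    have "(if f (u i) = f (u i) then 1 else 0::nat) \<le> C (f (u i))" unfolding C_def
      by (rule member_le_sum) (use ij in auto)
    then show ?thesis by simp
  qed
  have fibC: "fib E g C v = (\<Sum>k\<in>{i..<j}. if g (f (u k)) = v then 1 else 0)" for g v
  proof -
    have "fib E g C v = (\<Sum>e\<in>{e\<in>E. g e = v}. \<Sum>k\<in>{i..<j}. if f (u k) = e then 1 else 0)"
      unfolding fib_def C_def by simp
    also have "\<dots> = (\<Sum>k\<in>{i..<j}. \<Sum>e\<in>{e\<in>E. g e = v}. if f (u k) = e then 1 else 0)"
      by (rule sum.swap)
    also have "\<dots> = (\<Sum>k\<in>{i..<j}. if g (f (u k)) = v then 1 else 0)"
      using fin fu by (intro sum.cong) (auto simp: P_def)
    finally show ?thesis .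
  qed
  have circC: "fib E so C v = fib E nx C v" for v
  proof -
    have "fib E so C v = (\<Sum>k\<in>{i..<j}. if u k = v then 1 else 0)"
      unfolding fibC using fu by simp
    moreover have "fib E nx C v = (\<Sum>k\<in>{i..<j}. if u (Suc k) = v then 1 else 0)"
      unfolding fibC using uS by simp
    moreover have "(\<Sum>k\<in>{i..<j}. (\<lambda>k. if u k = v then 1 else 0::nat) (Suc k)) + (if u i = v then 1 else 0)
        = (\<Sum>k\<in>{i..<j}. (\<lambda>k. if u k = v then 1 else 0::nat) k) + (if u j = v then 1 else 0)"
      by (rule tele) (use ij in simp)
    ultimately show ?thesis using ij by simp
  qed
  show ?thesis
    by (rule exI[of _ C]) (use C1 Csupp Cnz circC in blast)
qed


lemma CE:
  fixes E :: "'e set" and so nx :: "'e \<Rightarrow> 's" and D :: "'e \<Rightarrow> nat"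
  assumes fin: "finite E" and circ: "\<And>v. fib E so D v = fib E nx D v"
    and Z: "Z \<subseteq> E" "sum D Z \<le> 1"
    and e0: "e0 \<in> E" "2 \<le> D e0"
  shows "\<exists>C. (\<forall>e. C e \<le> 1) \<and> (\<forall>e. 0 < C e \<longrightarrow> e \<in> E \<and> 0 < D e) \<and> (\<exists>e. 0 < C e)
             \<and> (\<forall>v. fib E so C v = fib E nx C v) \<and> (\<forall>z\<in>Z. C z = 0)"
proof -
  have "0 < D e0" using e0(2) by simp
  then obtain C1 where C1: "\<forall>e. C1 e \<le> 1" "\<forall>e. 0 < C1 e \<longrightarrow> e \<in> E \<and> 0 < D e" "\<exists>e. 0 < C1 e"
    "\<forall>v. fib E so C1 v = fib E nx C1 v"
    using W[OF fin circ e0(1)] by blast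
  show ?thesis
  proof (cases "\<forall>z\<in>Z. C1 z = 0")
    case True then show ?thesis using C1 by blast
  next
    case False
    then obtain z1 where z1: "z1 \<in> Z" "0 < C1 z1" by blast
    have finZ: "finite Z" using Z fin finite_subset by blast
    have le: "C1 e \<le> D e" for e using C1(1)[rule_format, of e] C1(2)[rule_format, of e] by (cases "C1 e = 0") auto
    define D' where "D' e = D e - C1 e" for e
    have circ': "fib E so D' v = fib E nx D' v" for v
      unfolding D'_def using fib_diff[of C1 D, OF le, of E so v] fib_diff[of C1 D, OF le, of E nx v] circ[of v] C1(4) by simp
    have Dz1: "D z1 \<le> 1" using member_le_sum[of z1 Z D] finZ z1 Z by simp
    have "D' z = 0" if "z \<in> Z" for z
    proof (cases "z = z1")
      case True then show ?thesis unfolding D'_def using Dz1 z1(2) by simp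
    next
      case False
      have "sum D {z, z1} \<le> sum D Z" by (rule sum_mono2) (use finZ that z1 in auto)
      then have "D z + D z1 \<le> 1" using False Z by simp
      moreover have "0 < D z1" using C1(2) z1 by blast
      ultimately show ?thesis unfolding D'_def by simp
    qed
    moreover have "0 < D' e0" unfolding D'_def using e0 C1(1)[rule_format, of e0] by linarith
    ultimately have "0 < D' e0" by blast
    then obtain C2 where C2: "\<forall>e. C2 e \<le> 1" "\<forall>e. 0 < C2 e \<longrightarrow> e \<in> E \<and> 0 < D' e" "\<exists>e. 0 < C2 e"
      "\<forall>v. fib E so C2 v = fib E nx C2 v"
      using W[OF fin circ' e0(1)] by blast
    have "\<forall>z\<in>Z. C2 z = 0" using C2(2) \<open>\<And>z. z \<in> Z \<Longrightarrow> D' z = 0\<close> by (metis less_irrefl neq0_conv)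
    moreover have "\<forall>e. 0 < C2 e \<longrightarrow> e \<in> E \<and> 0 < D e"
    proof (intro allI impI)
      fix e assume "0 < C2 e"
      then have "e \<in> E" "0 < D' e" using C2(2) by auto
      then show "e \<in> E \<and> 0 < D e" unfolding D'_def by simp
    qed
    ultimately show ?thesis using C2 by blast
  qed
qed


lemma M:
  fixes E :: "'e set" and so nx :: "'e \<Rightarrow> 's" and D :: "'e \<Rightarrow> nat"
  assumes fin: "finite E" and circ: "\<And>v. fib E so D v = fib E nx D v"
    and Z: "Z \<subseteq> E" "sum D Z \<le> 1"
    and e0: "e0 \<in> E" "1 + n * card {e\<in>E. 0 < D e} < D e0"
  shows "\<exists>C. (\<forall>e. C e \<le> 1) \<and> (\<forall>e. 0 < C e \<longrightarrow> e \<in> E \<and> n + 1 \<le> D e) \<and> (\<exists>e. 0 < C e)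
             \<and> (\<forall>v. fib E so C v = fib E nx C v) \<and> (\<forall>z\<in>Z. C z = 0)"
  using circ Z(2) e0(2)
proof (induction "card {e\<in>E. 0 < D e}" arbitrary: D rule: less_induct)
  case (less D)
  have d2: "2 \<le> D e0" using less.prems(3) by linarith
  obtain C where C: "\<forall>e. C e \<le> 1" "\<forall>e. 0 < C e \<longrightarrow> e \<in> E \<and> 0 < D e" "\<exists>e. 0 < C e"
             "\<forall>v. fib E so C v = fib E nx C v" "\<forall>z\<in>Z. C z = 0"
    using CE[OF fin less.prems(1) Z(1) less.prems(2) e0(1) d2] by blast
  define A where "A = {e\<in>E. 0 < C e}"
  have finA: "finite A" "A \<noteq> {}" using fin C(2,3) unfolding A_def by auto
  define \<mu> where "\<mu> = Min (D ` A)"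
  have "\<mu> \<in> D ` A" unfolding \<mu>_def using finA by (intro Min_in) auto
  then obtain es where es: "es \<in> A" "D es = \<mu>" by auto
  have muLe: "\<mu> \<le> D e" if "e \<in> A" for e unfolding \<mu>_def using finA that by simp
  show ?case
  proof (cases "n + 1 \<le> \<mu>")
    case True
    have "\<forall>e. 0 < C e \<longrightarrow> e \<in> E \<and> n + 1 \<le> D e"
    proof (intro allI impI)
      fix e assume "0 < C e"
      then have "e \<in> A" "e \<in> E" using C(2) unfolding A_def by auto
      then show "e \<in> E \<and> n + 1 \<le> D e" using muLe[of e] True by simp
    qed
    then show ?thesis using C by blast
  next
    case False
    have C01: "C e = 0 \<or> C e = 1" for e using C(1)[rule_format, of e] by arith
    have le: "\<mu> * C e \<le> D e" for e
    proof (cases "C e = 0")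
      case True then show ?thesis by simp
    next
      case False
      then have "C e = 1" "e \<in> A" using C01[of e] C(2) unfolding A_def by auto
      then show ?thesis using muLe[of e] by simp
    qed
    define D' where "D' e = D e - \<mu> * C e" for e
    have circ': "fib E so D' v = fib E nx D' v" for v
      unfolding D'_def using fib_diff[of "\<lambda>e. \<mu> * C e" D, OF le, of E so v] fib_diff[of "\<lambda>e. \<mu> * C e" D, OF le, of E nx v] less.prems(1)[of v] C(4) by (simp add: fib_mult)
    have D'le: "D' e \<le> D e" for e unfolding D'_def by simp
    have Z': "sum D' Z \<le> 1" using sum_mono[of Z D' D] D'le less.prems(2) by (meson order_trans)
    have sub: "{e\<in>E. 0 < D' e} \<subset> {e\<in>E. 0 < D e}"
    proof
      show "{e\<in>E. 0 < D' e} \<subseteq> {e\<in>E. 0 < D e}"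
      proof
        fix e assume "e \<in> {e\<in>E. 0 < D' e}"
        then show "e \<in> {e\<in>E. 0 < D e}" using D'le[of e] by simp
      qed
      have "es \<in> {e\<in>E. 0 < D e}" using es C(2) unfolding A_def by auto
      moreover have "D' es = 0" unfolding D'_def using es C01[of es] unfolding A_def by auto
      ultimately show "{e\<in>E. 0 < D' e} \<noteq> {e\<in>E. 0 < D e}" by (metis (mono_tags, lifting) less_irrefl mem_Collect_eq)
    qed
    then have cl: "card {e\<in>E. 0 < D' e} < card {e\<in>E. 0 < D e}"
      using psubset_card_mono[of "{e\<in>E. 0 < D e}" "{e\<in>E. 0 < D' e}"] fin by simp
    have "n * card {e\<in>E. 0 < D' e} + n \<le> n * card {e\<in>E. 0 < D e}"
    proof -
      have "card {e\<in>E. 0 < D' e} + 1 \<le> card {e\<in>E. 0 < D e}" using cl by simp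
      then have "n * (card {e\<in>E. 0 < D' e} + 1) \<le> n * card {e\<in>E. 0 < D e}" by (rule mult_le_mono2)
      then show ?thesis by (simp add: algebra_simps)
    qed
    moreover have "D e0 - n \<le> D' e0"
    proof -
      have "\<mu> * C e0 \<le> n" using C01[of e0] False by (cases "C e0 = 0") simp_all
      then show ?thesis unfolding D'_def by simp
    qed
    ultimately have e0': "1 + n * card {e\<in>E. 0 < D' e} < D' e0" using less.prems(3) by linarith
    obtain C' where C': "\<forall>e. C' e \<le> 1" "\<forall>e. 0 < C' e \<longrightarrow> e \<in> E \<and> n + 1 \<le> D' e" "\<exists>e. 0 < C' e"
             "\<forall>v. fib E so C' v = fib E nx C' v" "\<forall>z\<in>Z. C' z = 0"
      using less.hyps[OF cl circ' Z' e0'] by blast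
    have "\<forall>e. 0 < C' e \<longrightarrow> e \<in> E \<and> n + 1 \<le> D e"
    proof (intro allI impI)
      fix e assume "0 < C' e"
      then have "e \<in> E" "n + 1 \<le> D' e" using C'(2) by auto
      then show "e \<in> E \<and> n + 1 \<le> D e" using D'le[of e] by simp
    qed
    then show ?thesis using C' by blast
  qed
qed



definition nxt :: "'s \<Rightarrow> ('a, 's) trans \<Rightarrow> 's" where
  "nxt s0 \<tau> = (if ttarget \<tau> = (\<lambda>_. 0) then s0 else (SOME t. 0 < ttarget \<tau> t))"

definition sinks :: "('a, 's) trans set \<Rightarrow> ('a, 's) trans set" where
  "sinks \<delta> = {\<tau>\<in>\<delta>. ttarget \<tau> = (\<lambda>_. 0)}"

lemma reg_facts:
  assumes "regular_grammar Sig S s0 \<delta>"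
  shows "finite S" "finite \<delta>" "s0 \<in> S" "\<And>\<tau>. \<tau> \<in> \<delta> \<Longrightarrow> tsource \<tau> \<in> S"
    "\<And>\<tau> x. \<tau> \<in> \<delta> \<Longrightarrow> x \<notin> S \<Longrightarrow> ttarget \<tau> x = 0"
    "\<And>\<tau>. \<tau> \<in> \<delta> \<Longrightarrow> (\<Sum>x\<in>S. ttarget \<tau> x) \<le> 1"
  using assms unfolding regular_grammar_def comm_grammar_def vsupp_in_def vsize_def by auto

lemma tt_val:
  assumes reg: "regular_grammar Sig S s0 \<delta>" and t: "\<tau> \<in> \<delta>"
  shows "ttarget \<tau> v = (if ttarget \<tau> = (\<lambda>_. 0) then 0 else if v = nxt s0 \<tau> then 1 else 0)"
    and "nxt s0 \<tau> \<in> S"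
proof -
  note rf = reg_facts[OF reg]
  have "ttarget \<tau> v = (if ttarget \<tau> = (\<lambda>_. 0) then 0 else if v = nxt s0 \<tau> then 1 else 0) \<and> nxt s0 \<tau> \<in> S"
  proof (cases "ttarget \<tau> = (\<lambda>_. 0)")
    case True then show ?thesis using rf(3) by (simp add: nxt_def)
  next
    case False
    then obtain t where tp: "0 < ttarget \<tau> t" by (metis neq0_conv ext)
    have tS: "t \<in> S" using rf(5)[OF t] tp by (metis less_irrefl)
    have tle: "ttarget \<tau> t \<le> 1"
      using member_le_sum[of t S "ttarget \<tau>"] tS rf(1) rf(6)[OF t] by simp
    have oth: "ttarget \<tau> x = 0" if "x \<noteq> t" for x
    proof (cases "x \<in> S")
      case False then show ?thesis using rf(5)[OF t] by simp
    next
      case True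
      have "sum (ttarget \<tau>) {t, x} \<le> sum (ttarget \<tau>) S" by (rule sum_mono2) (use rf(1) tS True in auto)
      then have "ttarget \<tau> t + ttarget \<tau> x \<le> 1" using that rf(6)[OF t] by simp
      then show ?thesis using tp by simp
    qed
    have "nxt s0 \<tau> = t"
    proof -
      have "0 < ttarget \<tau> (SOME t. 0 < ttarget \<tau> t)" using tp by (rule someI)
      then have "(SOME t. 0 < ttarget \<tau> t) = t" using oth by (metis less_irrefl)
      then show ?thesis using False by (simp add: nxt_def)
    qed
    then show ?thesis using False tS tp tle oth by auto
  qed
  then show "ttarget \<tau> v = (if ttarget \<tau> = (\<lambda>_. 0) then 0 else if v = nxt s0 \<tau> then 1 else 0)"
    and "nxt s0 \<tau> \<in> S" by auto
qed

lemma src_fib: "src \<delta> X v = fib \<delta> tsource X v"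
  by (simp add: src_def fib_def)

lemma conv_nx:
  assumes reg: "regular_grammar Sig S s0 \<delta>"
  shows "fib \<delta> (nxt s0) X v = tgt \<delta> X v + (if v = s0 then sum X (sinks \<delta>) else 0)"
proof -
  note rf = reg_facts[OF reg]
  have "fib \<delta> (nxt s0) X v = (\<Sum>\<tau>\<in>\<delta>. if nxt s0 \<tau> = v then X \<tau> else 0)"
    unfolding fib_def using rf(2) by (simp add: sum.inter_filter)
  also have "\<dots> = (\<Sum>\<tau>\<in>\<delta>. X \<tau> * ttarget \<tau> v + (if v = s0 \<and> ttarget \<tau> = (\<lambda>_. 0) then X \<tau> else 0))"
  proof (rule sum.cong)
    fix \<tau> assume t: "\<tau> \<in> \<delta>"
    show "(if nxt s0 \<tau> = v then X \<tau> else 0) = X \<tau> * ttarget \<tau> v + (if v = s0 \<and> ttarget \<tau> = (\<lambda>_. 0) then X \<tau> else 0)"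
      using tt_val(1)[OF reg t, of v] by (auto simp: nxt_def)
  qed simp
  also have "\<dots> = tgt \<delta> X v + (\<Sum>\<tau>\<in>\<delta>. if v = s0 \<and> ttarget \<tau> = (\<lambda>_. 0) then X \<tau> else 0)"
    unfolding tgt_def by (rule sum.distrib)
  also have "(\<Sum>\<tau>\<in>\<delta>. if v = s0 \<and> ttarget \<tau> = (\<lambda>_. 0) then X \<tau> else 0) = (if v = s0 then sum X (sinks \<delta>) else 0)"
    unfolding sinks_def using rf(2) by (simp add: sum.inter_filter)
  finally show ?thesis .
qed

lemma sumS:
  assumes reg: "regular_grammar Sig S s0 \<delta>" and g: "g ` \<delta> \<subseteq> S"
  shows "(\<Sum>v\<in>S. fib \<delta> g X v) = sum X \<delta>"
  unfolding fib_def by (rule sum.group) (use reg_facts[OF reg] g in auto)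

lemma nxt_img: "regular_grammar Sig S s0 \<delta> \<Longrightarrow> nxt s0 ` \<delta> \<subseteq> S"
  by (rule image_subsetI) (rule tt_val(2))

lemma sum_tgt_S:
  assumes reg: "regular_grammar Sig S s0 \<delta>"
  shows "(\<Sum>v\<in>S. tgt \<delta> X v) + sum X (sinks \<delta>) = sum X \<delta>"
proof -
  note rf = reg_facts[OF reg]
  have "sum X \<delta> = (\<Sum>v\<in>S. fib \<delta> (nxt s0) X v)" using sumS[OF reg nxt_img[OF reg]] by simp
  also have "\<dots> = (\<Sum>v\<in>S. tgt \<delta> X v + (if v = s0 then sum X (sinks \<delta>) else 0))"
    using conv_nx[OF reg] by simp
  also have "\<dots> = (\<Sum>v\<in>S. tgt \<delta> X v) + sum X (sinks \<delta>)"
    using rf(1,3) by (simp add: sum.distrib)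
  finally show ?thesis by simp
qed

lemma sum_src_S:
  assumes reg: "regular_grammar Sig S s0 \<delta>"
  shows "(\<Sum>v\<in>S. src \<delta> X v) = sum X \<delta>"
proof -
  have "tsource ` \<delta> \<subseteq> S" using reg_facts(4)[OF reg] by (rule image_subsetI)
  then show ?thesis using sumS[OF reg, of tsource X] by (simp add: src_fib)
qed

lemma sinksum:
  assumes reg: "regular_grammar Sig S s0 \<delta>"
    and h: "\<And>v. src \<delta> X v = tgt \<delta> X v + (if v = s0 then c else 0)"
  shows "sum X (sinks \<delta>) = c"
proof -
  note rf = reg_facts[OF reg]
  have "(\<Sum>v\<in>S. src \<delta> X v) = (\<Sum>v\<in>S. tgt \<delta> X v) + c"
    using h rf(1,3) by (simp add: sum.distrib)
  then show ?thesis using sum_tgt_S[OF reg, of X] sum_src_S[OF reg, of X] by simp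
qed

lemma eqle:
  fixes f g :: "'x \<Rightarrow> nat"
  assumes "finite A" "\<And>x. x \<in> A \<Longrightarrow> f x \<le> g x" "sum g A \<le> sum f A" "x \<in> A"
  shows "f x = g x"
proof (rule ccontr)
  assume "f x \<noteq> g x"
  then have "f x < g x" using assms(2,4) by (simp add: order_less_le)
  then have "sum f A < sum g A" using assms by (intro sum_strict_mono_ex1) auto
  then show False using assms(3) by simp
qed

lemma src_pos:
  assumes "finite \<delta>"
  shows "0 < src \<delta> X v \<longleftrightarrow> (\<exists>\<tau>\<in>\<delta>. tsource \<tau> = v \<and> 0 < X \<tau>)"
proof -
  have "src \<delta> X v = 0 \<longleftrightarrow> (\<forall>\<tau>\<in>{\<tau>\<in>\<delta>. tsource \<tau> = v}. X \<tau> = 0)"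
    unfolding src_def using assms by (intro sum_eq_0_iff) simp
  then show ?thesis by auto
qed



lemma tgt_diff:
  assumes "\<And>\<tau>. G \<tau> \<le> X \<tau>"
  shows "tgt \<delta> (\<lambda>\<tau>. X \<tau> - G \<tau>) v = tgt \<delta> X v - tgt \<delta> G v"
proof -
  have "tgt \<delta> (\<lambda>\<tau>. X \<tau> - G \<tau>) v = (\<Sum>\<tau>\<in>\<delta>. X \<tau> * ttarget \<tau> v - G \<tau> * ttarget \<tau> v)"
    unfolding tgt_def by (simp add: diff_mult_distrib)
  also have "\<dots> = tgt \<delta> X v - tgt \<delta> G v"
    unfolding tgt_def by (rule sum_subtractf_nat) (use assms in \<open>simp add: mult_le_mono1\<close>)
  finally show ?thesis .
qed

lemma tgt_mult: "tgt \<delta> (\<lambda>\<tau>. k * G \<tau>) v = k * tgt \<delta> G v"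
  unfolding tgt_def by (simp add: sum_distrib_left mult.assoc)

lemma tgt_mono: "(\<And>\<tau>. G \<tau> \<le> X \<tau>) \<Longrightarrow> tgt \<delta> G v \<le> tgt \<delta> X v"
  unfolding tgt_def by (rule sum_mono) (simp add: mult_le_mono1)

lemma reach_transfer:
  assumes "reach \<delta> D s t" "\<And>\<tau>. 0 < D' \<tau> \<longleftrightarrow> 0 < D \<tau>"
  shows "reach \<delta> D' s t"
  using assms(1)
proof induction
  case (base \<tau> t)
  have "0 < D' \<tau>" using base(2) assms(2) by simp
  then show ?case using base by (blast intro: reach.base)
next
  case (step u \<tau> t)
  have "0 < D' \<tau>" using \<open>0 < D \<tau>\<close> assms(2) by simp
  then show ?case using step by (blast intro: reach.step)
qed

lemma MC:
  assumes reg: "regular_grammar Sig S s0 \<delta>"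
    and C: "is_vec \<delta> C" "\<exists>\<tau>. 0 < C \<tau>" "src \<delta> C = tgt \<delta> C"
  shows "\<exists>Cm. simple_cycle S \<delta> Cm \<and> (\<forall>\<tau>. Cm \<tau> \<le> C \<tau>)"
proof -
  note rf = reg_facts[OF reg]
  define K where "K = {C'. is_vec \<delta> C' \<and> (\<forall>\<tau>. C' \<tau> \<le> C \<tau>) \<and> (\<exists>\<tau>. 0 < C' \<tau>) \<and> src \<delta> C' = tgt \<delta> C'}"
  have "C \<in> K" using C unfolding K_def by auto
  then obtain Cm where Cm: "Cm \<in> K" and min: "\<And>C'. C' \<in> K \<Longrightarrow> sum Cm \<delta> \<le> sum C' \<delta>"
    using ex_has_least_nat[of "\<lambda>C'. C' \<in> K" C "\<lambda>C'. sum C' \<delta>"] by blast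
  have vec: "\<And>\<tau>. \<tau> \<notin> \<delta> \<Longrightarrow> Cm \<tau> = 0" using Cm unfolding K_def is_vec_def vsupp_in_def by auto
  have circ: "src \<delta> Cm = tgt \<delta> Cm" using Cm unfolding K_def by auto
  have leC: "\<And>\<tau>. Cm \<tau> \<le> C \<tau>" using Cm unfolding K_def by auto
  obtain \<tau>1 where t1: "0 < Cm \<tau>1" using Cm unfolding K_def by auto
  have t1d: "\<tau>1 \<in> \<delta>" using vec t1 by (metis less_irrefl)
  have sumpos: "0 < sum Cm \<delta>"
    using member_le_sum[of \<tau>1 \<delta> Cm] t1d rf(2) t1 by simp
  have sink0: "sum Cm (sinks \<delta>) = 0"
    using sinksum[OF reg, of Cm 0] circ by simp
  have sinkz: "Cm \<tau> = 0" if "\<tau> \<in> sinks \<delta>" for \<tau>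
  proof -
    have "finite (sinks \<delta>)" using rf(2) unfolding sinks_def by simp
    then show ?thesis using sink0 that sum_eq_0_iff by blast
  qed
  define s where "s = tsource \<tau>1"
  have sS: "s \<in> S" using rf(4)[OF t1d] s_def by simp
  define R where "R = {t. t = s \<or> reach \<delta> Cm s t}"
  define CR where "CR \<tau> = (if tsource \<tau> \<in> R then Cm \<tau> else 0)" for \<tau>
  have CRle: "CR \<tau> \<le> Cm \<tau>" for \<tau> unfolding CR_def by simp
  have tle: "tgt \<delta> CR v \<le> src \<delta> CR v" for v
  proof (cases "v \<in> R")
    case True
    have "src \<delta> CR v = src \<delta> Cm v" unfolding src_def CR_def using True by (intro sum.cong) auto
    moreover have "tgt \<delta> CR v \<le> tgt \<delta> Cm v" by (rule tgt_mono) (rule CRle)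
    moreover have "tgt \<delta> Cm v = src \<delta> Cm v" using circ by simp
    ultimately show ?thesis by linarith
  next
    case False
    have "tgt \<delta> CR v = 0" unfolding tgt_def
    proof (rule sum.neutral, rule ballI)
      fix \<tau> assume td: "\<tau> \<in> \<delta>"
      show "CR \<tau> * ttarget \<tau> v = 0"
      proof (rule ccontr)
        assume "CR \<tau> * ttarget \<tau> v \<noteq> 0"
        then have a: "tsource \<tau> \<in> R" "0 < Cm \<tau>" "0 < ttarget \<tau> v" unfolding CR_def
          by (auto split: if_splits)
        have "reach \<delta> Cm s v"
        proof (cases "tsource \<tau> = s")
          case True then show ?thesis using a td by (blast intro: reach.base)
        next
          case False
          then have "reach \<delta> Cm s (tsource \<tau>)" using a(1) unfolding R_def by auto
          then show ?thesis using a td by (blast intro: reach.step)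
        qed
        then show False using False unfolding R_def by auto
      qed
    qed
    then show ?thesis by simp
  qed
  have sinkR: "sum CR (sinks \<delta>) = 0"
    using sinkz unfolding CR_def by (intro sum.neutral) auto
  have "(\<Sum>v\<in>S. src \<delta> CR v) = (\<Sum>v\<in>S. tgt \<delta> CR v)"
    using sum_src_S[OF reg, of CR] sum_tgt_S[OF reg, of CR] sinkR by simp
  then have onS: "tgt \<delta> CR v = src \<delta> CR v" if "v \<in> S" for v
    using eqle[of S "tgt \<delta> CR" "src \<delta> CR" v] rf(1) tle that by simp
  have offS: "tgt \<delta> CR v = src \<delta> CR v" if "v \<notin> S" for v
  proof -
    have "src \<delta> CR v = 0" unfolding src_def
      using rf(4) that by (intro sum.neutral) auto
    then show ?thesis using tle[of v] by simp
  qed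
  have circR: "src \<delta> CR = tgt \<delta> CR" using onS offS by (metis ext)
  have "CR \<in> K" unfolding K_def
  proof (intro CollectI conjI)
    show "is_vec \<delta> CR" unfolding is_vec_def vsupp_in_def
    proof (intro allI impI)
      fix x assume "x \<notin> \<delta>" then show "CR x = 0" using vec[of x] CRle[of x] by simp
    qed
    show "\<forall>\<tau>. CR \<tau> \<le> C \<tau>" using CRle leC le_trans by blast
    have "CR \<tau>1 = Cm \<tau>1" unfolding CR_def R_def s_def by simp
    then show "\<exists>\<tau>. 0 < CR \<tau>" using t1 by metis
    show "src \<delta> CR = tgt \<delta> CR" by (rule circR)
  qed
  then have "sum Cm \<delta> \<le> sum CR \<delta>" by (rule min)
  then have eqd: "CR \<tau> = Cm \<tau>" if "\<tau> \<in> \<delta>" for \<tau>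
    using eqle[of \<delta> CR Cm \<tau>] rf(2) CRle that by simp
  have conn: "connected_from \<delta> Cm s" unfolding connected_from_def dsupp_def
  proof (intro ballI)
    fix t assume "t \<in> {s. 0 < src \<delta> Cm s}"
    then obtain \<tau> where "\<tau> \<in> \<delta>" "tsource \<tau> = t" "0 < Cm \<tau>" using src_pos[OF rf(2)] by blast
    then have "0 < CR \<tau>" using eqd by simp
    then have "t \<in> R" unfolding CR_def using \<open>tsource \<tau> = t\<close> by (auto split: if_splits)
    then show "t = s \<or> reach \<delta> Cm s t" unfolding R_def by simp
  qed
  have cyc: "is_cycle S \<delta> Cm" unfolding is_cycle_def cycle_from_def
    using sS conn circ Cm unfolding K_def by blast
  have nz: "Cm \<noteq> (\<lambda>_. 0)" using t1 by auto
  have nodec: "\<not> (\<exists>Cs. length Cs \<ge> 2 \<and> (\<forall>C\<in>set Cs. is_cycle S \<delta> C \<and> C \<noteq> (\<lambda>_. 0)) \<and>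
            Cm = (\<lambda>\<tau>. \<Sum>C\<leftarrow>Cs. C \<tau>))"
  proof
    assume "\<exists>Cs. length Cs \<ge> 2 \<and> (\<forall>C\<in>set Cs. is_cycle S \<delta> C \<and> C \<noteq> (\<lambda>_. 0)) \<and>
            Cm = (\<lambda>\<tau>. \<Sum>C\<leftarrow>Cs. C \<tau>)"
    then obtain Cs where Cs: "length Cs \<ge> 2" "\<forall>C\<in>set Cs. is_cycle S \<delta> C \<and> C \<noteq> (\<lambda>_. 0)"
      "Cm = (\<lambda>\<tau>. \<Sum>C\<leftarrow>Cs. C \<tau>)" by blast
    then obtain a b rest where abr: "Cs = a # b # rest"
      by (cases Cs rule: remdups_adj.cases) auto
    have Cmab: "Cm \<tau> = a \<tau> + b \<tau> + (\<Sum>C\<leftarrow>rest. C \<tau>)" for \<tau>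
      using fun_cong[OF Cs(3), of \<tau>] abr by simp
    have inK: "X \<in> K" if "X \<in> {a, b}" for X
    proof -
      have cx: "is_cycle S \<delta> X" "X \<noteq> (\<lambda>_. 0)" using Cs(2) abr that by auto
      have "X \<tau> \<le> Cm \<tau>" for \<tau> using Cmab[of \<tau>] that by auto
      then have "X \<tau> \<le> C \<tau>" for \<tau> using leC le_trans by blast
      moreover have "\<exists>\<tau>. 0 < X \<tau>" using cx(2) by (metis ext neq0_conv)
      moreover have "is_vec \<delta> X" "src \<delta> X = tgt \<delta> X" using cx(1) unfolding is_cycle_def cycle_from_def by auto
      ultimately show ?thesis unfolding K_def by blast
    qed
    have "sum Cm \<delta> \<le> sum a \<delta>" "sum Cm \<delta> \<le> sum b \<delta>" using min inK by auto
    moreover have "sum a \<delta> + sum b \<delta> \<le> sum Cm \<delta>"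
    proof -
      have "sum (\<lambda>\<tau>. a \<tau> + b \<tau>) \<delta> \<le> sum Cm \<delta>" by (rule sum_mono) (simp add: Cmab)
      then show ?thesis by (simp add: sum.distrib)
    qed
    ultimately show False using sumpos by linarith
  qed
  have "simple_cycle S \<delta> Cm" unfolding simple_cycle_def using cyc nz nodec by blast
  then show ?thesis using leC by blast
qed



theorem lemma5:
  fixes Sig :: "'a set" and S :: "'s set" and s0 :: 's and \<delta> :: "('a, 's) trans set"
    and n :: nat and D :: "('a, 's) trans \<Rightarrow> nat"
  assumes "regular_grammar Sig S s0 \<delta>"
    and "is_run s0 \<delta> D"
    and "vnorm \<delta> D > 1 + n * card \<delta>"
  shows "\<exists>D1 C. D = (\<lambda>\<tau>. D1 \<tau> + n * C \<tau>) \<and> is_run s0 \<delta> D1 \<and> simple_cycle S \<delta> C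
           \<and> dsupp \<delta> D1 = dsupp \<delta> D"
proof -
  note reg = assms(1)
  note rf = reg_facts[OF reg]
  have vecD: "is_vec \<delta> D" and connD: "connected_from \<delta> D s0"
    and srcD: "src \<delta> D = (\<lambda>s. tgt \<delta> D s + (if s = s0 then 1 else 0))"
    using assms(2) unfolding is_run_def by auto
  have srcDv: "src \<delta> D v = tgt \<delta> D v + (if v = s0 then 1 else 0)" for v
    using srcD by simp
  have sinkD: "sum D (sinks \<delta>) = 1" using sinksum[OF reg srcDv] .
  have circD: "fib \<delta> tsource D v = fib \<delta> (nxt s0) D v" for v
    using srcDv[of v] conv_nx[OF reg, of D v] sinkD src_fib[of \<delta> D v] by simp
  have "vnorm \<delta> D \<in> insert 0 (D ` \<delta>)" unfolding vnorm_def using rf(2) by (intro Max_in) auto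
  then obtain e0 where e0: "e0 \<in> \<delta>" "vnorm \<delta> D = D e0" using assms(3) by auto
  have "card {e\<in>\<delta>. 0 < D e} \<le> card \<delta>" using rf(2) by (intro card_mono) auto
  then have "n * card {e\<in>\<delta>. 0 < D e} \<le> n * card \<delta>" by (rule mult_le_mono2)
  then have e0': "1 + n * card {e\<in>\<delta>. 0 < D e} < D e0" using assms(3) e0(2) by linarith
  have Zsub: "sinks \<delta> \<subseteq> \<delta>" unfolding sinks_def by auto
  obtain C where C: "\<forall>e. C e \<le> 1" "\<forall>e. 0 < C e \<longrightarrow> e \<in> \<delta> \<and> n + 1 \<le> D e" "\<exists>e. 0 < C e"
             "\<forall>v. fib \<delta> tsource C v = fib \<delta> (nxt s0) C v" "\<forall>z\<in>sinks \<delta>. C z = 0"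
    using M[OF rf(2) circD Zsub _ e0(1) e0'] sinkD by auto
  have sinkC: "sum C (sinks \<delta>) = 0" using C(5) by simp
  have circC: "src \<delta> C = tgt \<delta> C"
  proof
    fix v
    show "src \<delta> C v = tgt \<delta> C v"
      using src_fib[of \<delta> C v] C(4) conv_nx[OF reg, of C v] sinkC by simp
  qed
  have vecC: "is_vec \<delta> C" unfolding is_vec_def vsupp_in_def
  proof (intro allI impI)
    fix x assume "x \<notin> \<delta>" then show "C x = 0" using C(2) by (meson neq0_conv)
  qed
  obtain Cm where Cm: "simple_cycle S \<delta> Cm" "\<forall>\<tau>. Cm \<tau> \<le> C \<tau>"
    using MC[OF reg vecC C(3) circC] by blast
  have circCm: "src \<delta> Cm = tgt \<delta> Cm"
    using Cm(1) unfolding simple_cycle_def is_cycle_def cycle_from_def by auto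
  have nle: "n * Cm \<tau> \<le> D \<tau>" and pos: "0 < D \<tau> - n * Cm \<tau> \<longleftrightarrow> 0 < D \<tau>" for \<tau>
  proof -
    have "n * Cm \<tau> \<le> D \<tau> \<and> (0 < D \<tau> - n * Cm \<tau> \<longleftrightarrow> 0 < D \<tau>)"
    proof (cases "Cm \<tau> = 0")
      case True then show ?thesis by simp
    next
      case False
      then have "Cm \<tau> = 1" "0 < C \<tau>" using Cm(2)[rule_format, of \<tau>] C(1)[rule_format, of \<tau>] by auto
      then have "Cm \<tau> = 1" "n + 1 \<le> D \<tau>" using C(2)[rule_format, of \<tau>] by auto
      then show ?thesis by simp
    qed
    then show "n * Cm \<tau> \<le> D \<tau>" "0 < D \<tau> - n * Cm \<tau> \<longleftrightarrow> 0 < D \<tau>" by auto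
  qed
  define D1 where "D1 \<tau> = D \<tau> - n * Cm \<tau>" for \<tau>
  have pos1: "0 < D1 \<tau> \<longleftrightarrow> 0 < D \<tau>" for \<tau> unfolding D1_def by (rule pos)
  have decomp: "D = (\<lambda>\<tau>. D1 \<tau> + n * Cm \<tau>)"
  proof
    fix \<tau> show "D \<tau> = D1 \<tau> + n * Cm \<tau>" unfolding D1_def using nle[of \<tau>] by simp
  qed
  have srcpos: "0 < src \<delta> D1 v \<longleftrightarrow> 0 < src \<delta> D v" for v
    using src_pos[OF rf(2), of D1 v] src_pos[OF rf(2), of D v] pos1 by simp
  have dsupp_eq: "dsupp \<delta> D1 = dsupp \<delta> D" unfolding dsupp_def using srcpos by simp
  have vec1: "is_vec \<delta> D1" unfolding is_vec_def vsupp_in_def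
  proof (intro allI impI)
    fix x assume "x \<notin> \<delta>"
    then have "D x = 0" using vecD unfolding is_vec_def vsupp_in_def by blast
    then show "D1 x = 0" unfolding D1_def by simp
  qed
  have conn1: "connected_from \<delta> D1 s0" unfolding connected_from_def
  proof
    fix t assume "t \<in> dsupp \<delta> D1"
    then have "t \<in> dsupp \<delta> D" using dsupp_eq by simp
    then have "t = s0 \<or> reach \<delta> D s0 t" using connD unfolding connected_from_def by blast
    then show "t = s0 \<or> reach \<delta> D1 s0 t" using reach_transfer[of \<delta> D s0 t D1] pos1 by blast
  qed
  have src1: "src \<delta> D1 = (\<lambda>s. tgt \<delta> D1 s + (if s = s0 then 1 else 0))"
  proof
    fix v
    have a: "src \<delta> D1 v = src \<delta> D v - n * src \<delta> Cm v"
      unfolding D1_def src_fib using fib_diff[of "\<lambda>\<tau>. n * Cm \<tau>" D, OF nle, of \<delta> tsource v] fib_mult[of \<delta> tsource n Cm v] by simp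
    have b: "tgt \<delta> D1 v = tgt \<delta> D v - n * tgt \<delta> Cm v"
      unfolding D1_def using tgt_diff[of "\<lambda>\<tau>. n * Cm \<tau>" D, OF nle, of \<delta> v] tgt_mult[of \<delta> n Cm v] by simp
    have c: "n * tgt \<delta> Cm v \<le> tgt \<delta> D v"
      using tgt_mono[of "\<lambda>\<tau>. n * Cm \<tau>" D, OF nle, of \<delta> v] tgt_mult[of \<delta> n Cm v] by simp
    have d: "src \<delta> Cm v = tgt \<delta> Cm v" using circCm by simp
    show "src \<delta> D1 v = tgt \<delta> D1 v + (if v = s0 then 1 else 0)"
      using a b c d srcDv[of v] by simp
  qed
  have "is_run s0 \<delta> D1" unfolding is_run_def using vec1 conn1 src1 by blast
  then show ?thesis using decomp Cm(1) dsupp_eq by blast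
qed


end
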